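(* Let $p$ be a prime, $n\geq1$, and let $f\in\mathcal{Q}_n$ have degree $m\geq1$. Then for each $1\leq k\leq m$ there exists $q_k\in\mathbb{Z}[X]$ of degree $m-k$ such that $$f(X)=q_k(X)G_k(X)+R_{k-1}(X),\qquad R_{k-1}(X)=f(0)+\sum_{h=1}^{k-1}q_h(hp)G_h(X),$$ and $q_k(X)=q_{k+1}(X)(X-kp)+q_k(kp)$ for $k=1,\dots,m-1$. Moreover, for each such $k$: (i) if $v_p((pk)!)<n$, then $p^{\,n-v_p((pk)!)}$ divides $q_k(kp)$; (ii) $q_k(kp)G_k(X)\in\mathcal{Q}_n$, and if $k<p$ then $q_k(kp)G_k(X)\in\mathcal{M}^n$; (iii) $R_{k-1}\in\mathcal{Q}_n$ for all $k=1,\dots,m$, and $R_{k-1}\in\mathcal{M}^n$ for all $k$ with $1\leq k\leq\min(m,p)$.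
   Context: Fix a prime $p$ and $n\geq 1$. $\mathcal{M}=(p,X)\subseteq\mathbb{Z}[X]$ and $\mathcal{Q}_n=\bigcap_{i\in\{0,\dots,p^n-1\},\ p\mid i}(p^n,X-i)$, i.e. the set of $f\in\mathbb{Z}[X]$ with $p^n\mid f(i)$ for every integer $i$ divisible by $p$. For $k\geq1$, $G_k(X)=\prod_{h=0}^{k-1}(X-hp)$, and $G_0(X)=1$. $v_p$ denotes the $p$-adic valuation. *)

theory Defs
  imports "HOL-Computational_Algebra.Computational_Algebra"
begin

definition G :: "nat \<Rightarrow> nat \<Rightarrow> int poly" where
  "G p k = (\<Prod>h<k. [:- (int h * int p), 1:])"

definition Qset :: "nat \<Rightarrow> nat \<Rightarrow> int poly set" where
  "Qset p n = {f. \<forall>i::int. int p dvd i \<longrightarrow> int p ^ n dvd poly f i}"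

text \<open>M^n, the n-th power of the ideal M = (p, X) of Z[X]; it is the ideal generated by
  the products p^(n-j) X^j, j = 0..n, of n generators of M.\<close>
definition Mpow :: "nat \<Rightarrow> nat \<Rightarrow> int poly set" where
  "Mpow p n = {f. \<exists>g :: nat \<Rightarrow> int poly.
      f = (\<Sum>j\<le>n. smult (int p ^ (n - j)) (monom 1 j * g j))}"

end

theory Submission
  imports Defs
begin

lemma poly_G: "poly (G p k) x = (\<Prod>h<k. x - int h * int p)"
  by (simp add: G_def poly_prod)

lemma G_Suc: "G p (Suc k) = G p k * [:- (int k * int p), 1:]"
  by (simp add: G_def)

definition dd :: "nat \<Rightarrow> (int \<Rightarrow> int) \<Rightarrow> int \<Rightarrow> int" where
  "dd p g = (\<lambda>x. g (x + int p) - g x)"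

lemma dG_Suc: "dd p (poly (G p (Suc j))) x = int (Suc j) * int p * poly (G p j) x"
proof -
  have a: "poly (G p (Suc j)) (x + int p) = (x + int p) * (\<Prod>h<j. x - int h * int p)"
  proof -
    have "poly (G p (Suc j)) (x + int p) = (x + int p - int 0 * int p) * (\<Prod>h<j. x + int p - int (Suc h) * int p)"
      unfolding poly_G by (rule prod.lessThan_Suc_shift)
    also have "(\<Prod>h<j. x + int p - int (Suc h) * int p) = (\<Prod>h<j. x - int h * int p)"
      by (simp add: algebra_simps)
    finally show ?thesis by simp
  qed
  have b: "poly (G p (Suc j)) x = (\<Prod>h<j. x - int h * int p) * (x - int j * int p)"
    unfolding poly_G by simp
  show ?thesis unfolding dd_def a b by (simp add: poly_G algebra_simps)
qed

lemma dG_0: "dd p (poly (G p 0)) x = 0"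
  by (simp add: dd_def G_def)

lemma dG: "dd p (poly (G p j)) x = int j * int p * poly (G p (j - 1)) x"
  by (cases j) (simp_all add: dG_0 dG_Suc del: of_nat_Suc)

lemma ddpow_G: "((dd p) ^^ k) (poly (G p h)) x
   = (\<Prod>i<k. int h - int i) * int p ^ k * poly (G p (h - k)) x"
proof (induction k arbitrary: x)
  case 0
  then show ?case by simp
next
  case (Suc k)
  have "((dd p) ^^ Suc k) (poly (G p h)) x = dd p (((dd p) ^^ k) (poly (G p h))) x" by simp
  also have "\<dots> = (\<Prod>i<k. int h - int i) * int p ^ k * dd p (poly (G p (h - k))) x"
    unfolding dd_def Suc by (simp add: algebra_simps)
  also have "\<dots> = (\<Prod>i<k. int h - int i) * int p ^ k * (int (h - k) * int p * poly (G p (h - Suc k)) x)"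
    by (simp add: dG)
  also have "\<dots> = (\<Prod>i<Suc k. int h - int i) * int p ^ Suc k * poly (G p (h - Suc k)) x"
  proof (cases "k \<le> h")
    case True
    then show ?thesis by (simp add: of_nat_diff algebra_simps)
  next
    case False
    then have "(\<Prod>i<k. int h - int i) = 0" by (intro prod_zero) auto
    moreover have "(\<Prod>i<Suc k. int h - int i) = 0" using False by (intro prod_zero) auto
    ultimately show ?thesis by simp
  qed
  finally show ?case .
qed

lemma ddpow_lin: "((dd p) ^^ k) (\<lambda>x. \<Sum>i\<in>A. c i * g i x) = (\<lambda>x. \<Sum>i\<in>A. c i * ((dd p) ^^ k) (g i) x)"
proof (induction k)
  case 0
  then show ?case by simp
next
  case (Suc k)
  show ?case using Suc
    by (simp add: dd_def sum_subtractf[symmetric] algebra_simps)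
qed

lemma ddpow_Q: "(\<forall>i. int p dvd i \<longrightarrow> r dvd g i) \<Longrightarrow> int p dvd i \<Longrightarrow> r dvd ((dd p) ^^ k) g i"
proof (induction k arbitrary: i)
  case 0
  then show ?case by simp
next
  case (Suc k)
  have "int p dvd i + int p" using Suc by simp
  then show ?case using Suc by (simp add: dd_def)
qed

lemma fact_dvd_G1: "fact k dvd poly (G 1 k) (j::int)"
proof (induction k arbitrary: j)
  case 0
  then show ?case by (simp add: G_def)
next
  case (Suc k)
  define P where "P = poly (G 1 (Suc k))"
  have diff: "fact (Suc k) dvd P (x + 1) - P x" for x
  proof -
    have "P (x + 1) - P x = int (Suc k) * poly (G 1 k) x"
      using dG_Suc[of 1 k x] by (simp add: dd_def P_def)
    moreover have "fact (Suc k) = int (Suc k) * fact k" by simp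
    ultimately show ?thesis using Suc.IH[of x] by (simp add: mult_dvd_mono)
  qed
  have P0: "P 0 = 0" unfolding P_def poly_G by (rule prod_zero) auto
  have "fact (Suc k) dvd P j"
  proof (induction j rule: int_induct[where k = 0])
    case base
    then show ?case by (simp add: P0)
  next
    case (step1 i)
    then show ?case using diff[of i] by (metis dvd_add diff_add_cancel)
  next
    case (step2 i)
    have "P (i - 1) = P i - (P (i - 1 + 1) - P (i - 1))" by simp
    then show ?case using diff[of "i - 1"] step2 by (metis dvd_diff)
  qed
  then show ?case by (simp add: P_def)
qed

lemma poly_G_mult: "poly (G p k) (int p * j) = int p ^ k * poly (G 1 k) j"
proof -
  have "poly (G p k) (int p * j) = (\<Prod>h<k. int p * (j - int h))"
    unfolding poly_G by (simp add: algebra_simps)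
  also have "\<dots> = int p ^ k * poly (G 1 k) j"
    unfolding poly_G by (simp add: prod.distrib)
  finally show ?thesis .
qed

definition Cset :: "nat \<Rightarrow> nat \<Rightarrow> int poly set" where
  "Cset p n = {f. \<forall>j. int p ^ (n - j) dvd coeff f j}"

lemma C_mono: "f \<in> Cset p b \<Longrightarrow> a \<le> b \<Longrightarrow> f \<in> Cset p a"
  unfolding Cset_def
proof safe
  fix j assume "\<forall>j. int p ^ (b - j) dvd coeff f j" "a \<le> b"
  moreover have "int p ^ (a - j) dvd int p ^ (b - j)" using \<open>a \<le> b\<close> by (intro le_imp_power_dvd) auto
  ultimately show "int p ^ (a - j) dvd coeff f j" by (meson dvd_trans)
qed

lemma C_add: "f \<in> Cset p n \<Longrightarrow> g \<in> Cset p n \<Longrightarrow> f + g \<in> Cset p n"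
  unfolding Cset_def by auto

lemma C_sum: "(\<And>i. i \<in> A \<Longrightarrow> f i \<in> Cset p n) \<Longrightarrow> (\<Sum>i\<in>A. f i) \<in> Cset p n"
proof (induction A rule: infinite_finite_induct)
  case (infinite A)
  then show ?case by (simp add: Cset_def)
next
  case empty
  then show ?case by (simp add: Cset_def)
next
  case (insert x F)
  then show ?case by (simp add: C_add)
qed

lemma C_mult: "f \<in> Cset p a \<Longrightarrow> g \<in> Cset p b \<Longrightarrow> f * g \<in> Cset p (a + b)"
  unfolding Cset_def
proof (safe)
  fix j
  assume f: "\<forall>j. int p ^ (a - j) dvd coeff f j" and g: "\<forall>j. int p ^ (b - j) dvd coeff g j"
  show "int p ^ (a + b - j) dvd coeff (f * g) j"
    unfolding coeff_mult
  proof (rule dvd_sum)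
    fix i assume "i \<in> {..j}"
    then have "a + b - j \<le> (a - i) + (b - (j - i))" by auto
    then have "int p ^ (a + b - j) dvd int p ^ (a - i) * int p ^ (b - (j - i))"
      by (simp add: le_imp_power_dvd flip: power_add)
    also have "\<dots> dvd coeff f i * coeff g (j - i)"
      using f g by (simp add: mult_dvd_mono)
    finally show "int p ^ (a + b - j) dvd coeff f i * coeff g (j - i)" .
  qed
qed

lemma C_const: "int p ^ n dvd c \<Longrightarrow> [:c:] \<in> Cset p n"
  unfolding Cset_def by (auto simp: coeff_pCons split: nat.splits)

lemma C_G: "G p k \<in> Cset p k"
proof (induction k)
  case 0
  then show ?case by (simp add: G_def Cset_def)
next
  case (Suc k)
  have "[:- (int k * int p), 1:] \<in> Cset p 1"
    unfolding Cset_def by (auto simp: coeff_pCons split: nat.splits)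
  from C_mult[OF Suc this] show ?case by (simp add: G_Suc)
qed

lemma C_Mpow: assumes "f \<in> Cset p n" shows "f \<in> Mpow p n"
proof -
  define g where "g = (\<lambda>j. if j < n then [:coeff f j div int p ^ (n - j):] else poly_shift n f)"
  have "f = (\<Sum>j\<le>n. smult (int p ^ (n - j)) (monom 1 j * g j))"
  proof (rule poly_eqI)
    fix i
    have "coeff (\<Sum>j\<le>n. smult (int p ^ (n - j)) (monom 1 j * g j)) i
        = (\<Sum>j\<le>n. int p ^ (n - j) * (if i < j then 0 else coeff (g j) (i - j)))"
      by (simp add: coeff_sum coeff_monom_mult cong: if_cong)
    also have "\<dots> = (\<Sum>j\<in>insert n {..<n}. int p ^ (n - j) * (if i < j then 0 else coeff (g j) (i - j)))"
      by (simp add: lessThan_Suc_atMost[symmetric] lessThan_Suc)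
    also have "\<dots> = (if i < n then 0 else coeff f i) + (\<Sum>j<n. int p ^ (n - j) * (if i < j then 0 else coeff (g j) (i - j)))"
      by (simp add: g_def coeff_poly_shift)
    also have "(\<Sum>j<n. int p ^ (n - j) * (if i < j then 0 else coeff (g j) (i - j)))
        = (\<Sum>j<n. if j = i then coeff f i else 0)"
    proof (rule sum.cong)
      fix j assume j: "j \<in> {..<n}"
      show "int p ^ (n - j) * (if i < j then 0 else coeff (g j) (i - j)) = (if j = i then coeff f i else 0)"
        using j assms unfolding Cset_def by (auto simp: g_def coeff_pCons split: nat.splits)
    qed simp
    also have "(\<Sum>j<n. if j = i then coeff f i else 0) = (if i < n then coeff f i else 0)"
      by (simp add: sum.delta')
    finally show "coeff f i = coeff (\<Sum>j\<le>n. smult (int p ^ (n - j)) (monom 1 j * g j)) i"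
      by simp
  qed
  then show ?thesis unfolding Mpow_def by blast
qed

lemma mult_fact_aux:
  assumes "prime p" "j < p"
  shows "multiplicity p (fact (p * k + j) :: nat) = multiplicity p (fact (p * k) :: nat)"
  using assms(2)
proof (induction j)
  case 0
  then show ?case by simp
next
  case (Suc j)
  have nd: "\<not> p dvd Suc (p * k + j)"
  proof
    assume "p dvd Suc (p * k + j)"
    then have "p dvd Suc j" by (metis add_Suc_right dvd_add_right_iff dvd_triv_left)
    then show False using Suc.prems by (auto dest: dvd_imp_le)
  qed
  have "fact (p * k + Suc j) = Suc (p * k + j) * (fact (p * k + j) :: nat)" by simp
  moreover have "multiplicity p (Suc (p * k + j) * (fact (p * k + j) :: nat))
      = multiplicity p (Suc (p * k + j)) + multiplicity p (fact (p * k + j) :: nat)"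
    using assms(1) by (intro prime_elem_multiplicity_mult_distrib) auto
  ultimately have "multiplicity p (fact (p * k + Suc j) :: nat)
      = multiplicity p (Suc (p * k + j)) + multiplicity p (fact (p * k + j) :: nat)" by simp
  also have "multiplicity p (Suc (p * k + j)) = 0" using nd by (rule not_dvd_imp_multiplicity_0)
  finally show ?case using Suc by simp
qed

lemma legendre_p:
  assumes "prime p"
  shows "multiplicity p (fact (p * k) :: nat) = k + multiplicity p (fact k :: nat)"
proof (induction k)
  case 0
  then show ?case by simp
next
  case (Suc k)
  have p0: "p > 0" using assms prime_gt_0_nat by blast
  have e: "p * Suc k = Suc (p * k + (p - 1))" using p0 by (simp add: algebra_simps)
  have "fact (p * Suc k) = (fact (Suc (p * k + (p - 1))) :: nat)" by (simp only: e)
  also have "\<dots> = Suc (p * k + (p - 1)) * fact (p * k + (p - 1))" by (metis fact_Suc of_nat_id)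
  also have "Suc (p * k + (p - 1)) = p * Suc k" by (simp only: e)
  finally have fe: "fact (p * Suc k) = (p * Suc k) * (fact (p * k + (p - 1)) :: nat)" .
  have "multiplicity p ((p * Suc k) * (fact (p * k + (p - 1)) :: nat))
      = multiplicity p (p * Suc k) + multiplicity p (fact (p * k + (p - 1)) :: nat)"
    using assms p0 by (intro prime_elem_multiplicity_mult_distrib) auto
  then have "multiplicity p (fact (p * Suc k) :: nat)
      = multiplicity p (p * Suc k) + multiplicity p (fact (p * k + (p - 1)) :: nat)"
    by (simp only: fe)
  also have "multiplicity p (fact (p * k + (p - 1)) :: nat) = multiplicity p (fact (p * k) :: nat)"
    using assms p0 by (intro mult_fact_aux) auto
  also have "multiplicity p (p * Suc k) = 1 + multiplicity p (Suc k)"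
    using assms p0 by (subst prime_elem_multiplicity_mult_distrib) (auto simp: multiplicity_self)
  also have "fact (Suc k) = Suc k * (fact k :: nat)" by (metis fact_Suc of_nat_id)
  moreover have "multiplicity p (Suc k * (fact k :: nat)) = multiplicity p (Suc k) + multiplicity p (fact k :: nat)"
    using assms by (intro prime_elem_multiplicity_mult_distrib) auto
  ultimately show ?case using Suc by simp
qed

lemma div_i:
  assumes "prime p" and key: "int p ^ n dvd c * fact k * int p ^ k"
    and lt: "multiplicity p (fact (p * k) :: nat) < n"
  shows "int p ^ (n - multiplicity p (fact (p * k) :: nat)) dvd c"
proof -
  define a where "a = multiplicity p (fact k :: nat)"
  obtain u :: nat where u: "fact k = p ^ a * u" "\<not> p dvd u"
    unfolding a_def using assms(1) by (metis multiplicity_decompose' fact_nonzero not_prime_unit)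
  define v where "v = multiplicity p (fact (p * k) :: nat)"
  have v: "v = k + a" unfolding v_def a_def using assms(1) by (rule legendre_p)
  have fk: "(fact k :: int) = int p ^ a * int u"
    using arg_cong[OF u(1), of int] by (simp add: of_nat_fact)
  have "int p ^ (n - v) * int p ^ v = int p ^ n"
    using lt by (simp add: v_def flip: power_add)
  moreover have "c * fact k * int p ^ k = (c * int u) * int p ^ v"
    by (simp add: fk v power_add algebra_simps)
  ultimately have "int p ^ (n - v) * int p ^ v dvd (c * int u) * int p ^ v" using key by metis
  then have d: "int p ^ (n - v) dvd c * int u"
    using assms(1) by (subst (asm) dvd_times_right_cancel_iff) (auto simp: prime_gt_0_nat)
  have "coprime (int p) (int u)" using assms(1) u(2)
    by (simp add: prime_imp_coprime)
  then have "coprime (int p ^ (n - v)) (int u)" by simp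
  with d show ?thesis unfolding v_def[symmetric] using coprime_dvd_mult_left_iff by blast
qed

lemma div_small:
  assumes "prime p" and key: "int p ^ n dvd c * fact k * int p ^ k" and "k < p"
  shows "int p ^ (n - k) dvd c"
proof (cases "k < n")
  case False
  then show ?thesis by simp
next
  case True
  have "int p ^ (n - k) * int p ^ k = int p ^ n"
    using True by (simp flip: power_add)
  with key have "int p ^ (n - k) * int p ^ k dvd (c * fact k) * int p ^ k" by simp
  then have d: "int p ^ (n - k) dvd c * fact k"
    using assms(1) by (subst (asm) dvd_times_right_cancel_iff) (auto simp: prime_gt_0_nat)
  have "\<not> p dvd fact k" using assms by (simp add: prime_dvd_fact_iff)
  then have "\<not> int p dvd fact k" by (metis int_dvd_int_iff of_nat_fact)
  then have "coprime (int p) (fact k)" using assms(1) by (simp add: prime_imp_coprime)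
  then have "coprime (int p ^ (n - k)) (fact k)" by simp
  with d show ?thesis using coprime_dvd_mult_left_iff by blast
qed

lemma Q_sum: "(\<And>i. i \<in> A \<Longrightarrow> f i \<in> Qset p n) \<Longrightarrow> (\<Sum>i\<in>A. f i) \<in> Qset p n"
proof (induction A rule: infinite_finite_induct)
  case (infinite A)
  then show ?case by (simp add: Qset_def)
next
  case empty
  then show ?case by (simp add: Qset_def)
next
  case (insert x F)
  then show ?case by (simp add: Qset_def)
qed

primrec qs :: "nat \<Rightarrow> int poly \<Rightarrow> nat \<Rightarrow> int poly" where
  "qs p f 0 = f"
| "qs p f (Suc k) = synthetic_div (qs p f k) (int k * int p)"

theorem mainTheorem11:
  fixes p n m :: nat and f :: "int poly"
  assumes "prime p" and "n \<ge> 1" and "f \<in> Qset p n"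
    and "degree f = m" and "m \<ge> 1"
  shows "\<exists>q :: nat \<Rightarrow> int poly.
    let R = (\<lambda>j. [:poly f 0:] + (\<Sum>h\<in>{1..j}. smult (poly (q h) (int h * int p)) (G p h)))
    in (\<forall>k\<in>{1..m}. degree (q k) = m - k \<and> f = q k * G p k + R (k - 1))
     \<and> (\<forall>k\<in>{1..m - 1}. q k = q (Suc k) * [:- (int k * int p), 1:] + [:poly (q k) (int k * int p):])
     \<and> (\<forall>k\<in>{1..m}.
          (multiplicity p (fact (p * k)) < n \<longrightarrow>
             int p ^ (n - multiplicity p (fact (p * k))) dvd poly (q k) (int k * int p))
        \<and> smult (poly (q k) (int k * int p)) (G p k) \<in> Qset p n
        \<and> (k < p \<longrightarrow> smult (poly (q k) (int k * int p)) (G p k) \<in> Mpow p n))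
     \<and> (\<forall>k\<in>{1..m}. R (k - 1) \<in> Qset p n)
     \<and> (\<forall>k\<in>{1..min m p}. R (k - 1) \<in> Mpow p n)"
proof -
  define q where "q = qs p f"
  define c where "c = (\<lambda>h. poly (q h) (int h * int p))"
  define S where "S = (\<lambda>k. \<Sum>h<k. smult (c h) (G p h))"
  have rec: "q k = q (Suc k) * [:- (int k * int p), 1:] + [:c k:]" for k
    using synthetic_div_correct'[of "int k * int p" "q k"]
    by (simp add: q_def c_def mult.commute)
  have deg: "k \<le> m \<Longrightarrow> degree (q k) = m - k" for k
  proof (induction k)
    case 0
    then show ?case using assms by (simp add: q_def)
  next
    case (Suc k)
    then show ?case by (simp add: q_def degree_synthetic_div)
  qed
  have expand: "f = q k * G p k + S k" for k
  proof (induction k)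
    case 0
    then show ?case by (simp add: q_def S_def G_def)
  next
    case (Suc k)
    have "f = (q (Suc k) * [:- (int k * int p), 1:] + [:c k:]) * G p k + S k"
      using Suc rec[of k] by simp
    also have "\<dots> = q (Suc k) * G p (Suc k) + S (Suc k)"
      by (simp add: G_Suc S_def algebra_simps)
    finally show ?case .
  qed
  have RS: "[:poly f 0:] + (\<Sum>h\<in>{1..j}. smult (poly (q h) (int h * int p)) (G p h)) = S (Suc j)" for j
  proof (induction j)
    case 0
    then show ?case by (simp add: S_def c_def q_def G_def)
  next
    case (Suc j)
    then show ?case by (simp add: S_def c_def add.assoc)
  qed
  have full: "f = S (Suc m)"
  proof -
    have "degree (q m) = 0" using deg by simp
    then have qm: "q m = [:c m:]" unfolding c_def
      by (metis degree_eq_zeroE poly_const_conv)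
    show ?thesis using expand[of m] by (simp add: qm S_def)
  qed
  have polyf: "poly f = (\<lambda>x. \<Sum>h<Suc m. c h * poly (G p h) x)"
    by (subst full) (simp add: S_def poly_sum fun_eq_iff)
  have key: "int p ^ n dvd c h * fact h * int p ^ h" if h: "h \<le> m" for h
  proof -
    have Q: "\<forall>i. int p dvd i \<longrightarrow> int p ^ n dvd poly f i" using assms(3) by (simp add: Qset_def)
    have "int p ^ n dvd ((dd p) ^^ h) (poly f) 0"
      by (rule ddpow_Q[OF Q]) simp
    also have "((dd p) ^^ h) (poly f) 0 = (\<Sum>i<Suc m. c i * ((\<Prod>j<h. int i - int j) * int p ^ h * poly (G p (i - h)) 0))"
      unfolding polyf ddpow_lin by (simp add: ddpow_G)
    also have "\<dots> = c h * ((\<Prod>j<h. int h - int j) * int p ^ h * poly (G p (h - h)) 0)"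
      (is "sum ?g _ = _")
    proof -
      have "sum ?g {..<Suc m} = sum ?g {h}"
      proof (rule sum.mono_neutral_right)
        show "\<forall>i\<in>{..<Suc m} - {h}. ?g i = 0"
        proof
          fix i assume i: "i \<in> {..<Suc m} - {h}"
          show "?g i = 0"
          proof (cases "i < h")
            case True
            then have "(\<Prod>j<h. int i - int j) = 0" by (intro prod_zero) auto
            then show ?thesis by simp
          next
            case False
            with i have "i - h > 0" by auto
            then have "poly (G p (i - h)) 0 = 0" unfolding poly_G by (intro prod_zero) auto
            then show ?thesis by simp
          qed
        qed
      qed (use h in auto)
      then show ?thesis by simp
    qed
    also have "(\<Prod>j<h. int h - int j) = fact h"
    proof -
      have "(fact h :: int) = of_nat (\<Prod>i = 0..<h. h - i)" by (rule fact_prod_rev)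
      also have "\<dots> = (\<Prod>j<h. int h - int j)"
        by (simp add: of_nat_prod atLeast0LessThan of_nat_diff)
      finally show ?thesis by simp
    qed
    finally show ?thesis by (simp add: G_def algebra_simps)
  qed
  have smQ: "smult (c k) (G p k) \<in> Qset p n" if "k \<le> m" for k
    unfolding Qset_def
  proof (safe)
    fix i :: int assume "int p dvd i"
    then obtain j where j: "i = int p * j" by blast
    have "c k * fact k * int p ^ k dvd c k * int p ^ k * poly (G 1 k) j"
      using fact_dvd_G1[of k j] by (simp add: mult_dvd_mono algebra_simps)
    then have "int p ^ n dvd c k * int p ^ k * poly (G 1 k) j"
      using key[OF that] by (rule dvd_trans[rotated])
    moreover have "poly (smult (c k) (G p k)) i = c k * int p ^ k * poly (G 1 k) j"
      by (simp only: j poly_smult poly_G_mult mult.assoc)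
    ultimately show "int p ^ n dvd poly (smult (c k) (G p k)) i" by metis
  qed
  have smC: "smult (c k) (G p k) \<in> Cset p n" if "k \<le> m" "k < p" for k
  proof -
    have "[:c k:] \<in> Cset p (n - k)"
      by (rule C_const, rule div_small[OF assms(1) key[OF that(1)] that(2)])
    from C_mult[OF this C_G] have "[:c k:] * G p k \<in> Cset p (n - k + k)" .
    then have "[:c k:] * G p k \<in> Cset p n" by (rule C_mono) simp
    then show ?thesis by (simp add:)
  qed
  show ?thesis
  proof (rule exI[of _ q], unfold Let_def RS, intro conjI ballI)
    fix k assume k: "k \<in> {1..m}"
    show "degree (q k) = m - k" using k deg by simp
    show "f = q k * G p k + S (Suc (k - 1))" using k expand[of k] by simp
    show "multiplicity p (fact (p * k)) < n \<longrightarrow>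
             int p ^ (n - multiplicity p (fact (p * k))) dvd poly (q k) (int k * int p)"
      using div_i[OF assms(1) key[of k]] k by (simp add: c_def)
    show "smult (poly (q k) (int k * int p)) (G p k) \<in> Qset p n"
      using smQ[of k] k by (simp add: c_def)
    show "k < p \<longrightarrow> smult (poly (q k) (int k * int p)) (G p k) \<in> Mpow p n"
      using smC[of k] k C_Mpow by (auto simp: c_def)
    show "S (Suc (k - 1)) \<in> Qset p n"
      unfolding S_def using k by (intro Q_sum smQ) auto
  next
    fix k assume k: "k \<in> {1..m - 1}"
    show "q k = q (Suc k) * [:- (int k * int p), 1:] + [:poly (q k) (int k * int p):]"
      using rec[of k] by (simp add: c_def)
  next
    fix k assume k: "k \<in> {1..min m p}"
    have "S (Suc (k - 1)) \<in> Cset p n"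
      unfolding S_def using k by (intro C_sum smC) auto
    then show "S (Suc (k - 1)) \<in> Mpow p n" by (rule C_Mpow)
  qed
qed

end
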